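(* In the $\ell^2$ linear social choice setting, random dictatorship has worst-case distortion $\Omega(d)$.
   Context: Setting ($\ell^2$ linear social choice). Fix a dimension $d$. An instance consists of $n$ voters and $m$ candidates, each a vector in $\mathbb{R}^d_{\ge 0}$ with Euclidean norm $1$, with every voter vector in $\mathrm{Cone}(C)$ (nonnegative linear combinations of the candidate vectors $C$). Utility $u_v(c)=v^\top c$; each voter reports a ranking of $C$ consistent with its utilities (ties broken arbitrarily). $\mathrm{UW}(c)=\sum_v u_v(c)$. Distortion of a randomized rule on an instance: $\max_c\mathrm{UW}(c)/\mathbb{E}_{c\sim f}[\mathrm{UW}(c)]$; worst-case distortion is the supremum over instances, as a function of $d$. Random dictatorship: pick a voter uniformly at random and output its top-ranked candidate. *)

theory Defs
  imports Complex_Main "HOL-Library.Extended_Real"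
begin

text \<open>Vectors of R^d are represented as functions nat => real vanishing at indices >= d
  (the dimension d varies inside the statement, so it cannot be a type).\<close>

definition in_dim :: "nat \<Rightarrow> (nat \<Rightarrow> real) \<Rightarrow> bool" where
  "in_dim d x \<longleftrightarrow> (\<forall>i\<ge>d. x i = 0)"

definition ip :: "nat \<Rightarrow> (nat \<Rightarrow> real) \<Rightarrow> (nat \<Rightarrow> real) \<Rightarrow> real" where
  "ip d x y = (\<Sum>i<d. x i * y i)"

definition unit_nonneg :: "nat \<Rightarrow> (nat \<Rightarrow> real) \<Rightarrow> bool" where
  "unit_nonneg d x \<longleftrightarrow> in_dim d x \<and> (\<forall>i<d. 0 \<le> x i) \<and> sqrt (ip d x x) = 1"

definition in_cone :: "nat \<Rightarrow> (nat \<Rightarrow> real) set \<Rightarrow> (nat \<Rightarrow> real) \<Rightarrow> bool" where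
  "in_cone d C v \<longleftrightarrow> (\<exists>lam. (\<forall>c\<in>C. 0 \<le> lam c) \<and> (\<forall>i<d. v i = (\<Sum>c\<in>C. lam c * c i)))"

text \<open>An instance: n voters V 0, ..., V (n-1) (with multiplicity), a finite nonempty set C of
  candidates, and for each voter the top-ranked candidate of its reported ranking
  (any utility-maximizing candidate, since ties are broken arbitrarily).\<close>
definition valid_instance ::
  "nat \<Rightarrow> nat \<Rightarrow> (nat \<Rightarrow> nat \<Rightarrow> real) \<Rightarrow> (nat \<Rightarrow> real) set \<Rightarrow> (nat \<Rightarrow> (nat \<Rightarrow> real)) \<Rightarrow> bool" where
  "valid_instance d n V C tp \<longleftrightarrow>
     0 < n \<and> finite C \<and> C \<noteq> {} \<and>
     (\<forall>c\<in>C. unit_nonneg d c) \<and>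
     (\<forall>i<n. unit_nonneg d (V i) \<and> in_cone d C (V i)) \<and>
     (\<forall>i<n. tp i \<in> C \<and> (\<forall>c\<in>C. ip d (V i) c \<le> ip d (V i) (tp i)))"

definition UW :: "nat \<Rightarrow> nat \<Rightarrow> (nat \<Rightarrow> nat \<Rightarrow> real) \<Rightarrow> (nat \<Rightarrow> real) \<Rightarrow> real" where
  "UW d n V c = (\<Sum>i<n. ip d (V i) c)"

definition rd_distortion ::
  "nat \<Rightarrow> nat \<Rightarrow> (nat \<Rightarrow> nat \<Rightarrow> real) \<Rightarrow> (nat \<Rightarrow> real) set \<Rightarrow> (nat \<Rightarrow> (nat \<Rightarrow> real)) \<Rightarrow> real" where
  "rd_distortion d n V C tp =
     (MAX c\<in>C. UW d n V c) / ((\<Sum>i<n. UW d n V (tp i)) / real n)"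

definition rd_worst_distortion :: "nat \<Rightarrow> ereal" where
  "rd_worst_distortion d =
     (SUP (n, V, C, tp) \<in> {(n, V, C, tp). valid_instance d n V C tp}.
        ereal (rd_distortion d n V C tp))"

end

theory Submission
  imports Defs
begin

definition ev :: "nat \<Rightarrow> nat \<Rightarrow> real" where
  "ev k = (\<lambda>i. if i = k then 1 else 0)"

definition vt :: "nat \<Rightarrow> nat \<Rightarrow> real" where
  "vt i = (\<lambda>j. if j = 0 \<or> j = Suc i then 1 / sqrt 2 else 0)"

lemma ip_ev: "k < d \<Longrightarrow> ip d x (ev k) = x k"
  unfolding ip_def ev_def
  by (simp add: if_distrib sum.delta cong: if_cong)

lemma ev_inj: "inj ev"
  unfolding inj_def ev_def by (metis zero_neq_one)

lemma ev_unit: "k < d \<Longrightarrow> unit_nonneg d (ev k)"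
  unfolding unit_nonneg_def in_dim_def
  by (auto simp: ip_ev) (auto simp: ev_def)

lemma vt_unit:
  assumes "Suc i < d" shows "unit_nonneg d (vt i)"
proof -
  have "ip d (vt i) (vt i) = (\<Sum>j<d. (if j = 0 \<or> j = Suc i then 1/2 else 0))"
    unfolding ip_def vt_def by (intro sum.cong) (auto simp: power_divide)
  also have "\<dots> = (\<Sum>j\<in>{0, Suc i}. 1/2)"
    using assms by (intro sum.mono_neutral_cong_right) auto
  also have "\<dots> = 1" by simp
  finally show ?thesis using assms
    unfolding unit_nonneg_def in_dim_def by (auto simp: vt_def)
qed

lemma vt_cone:
  assumes "Suc i < d" shows "in_cone d (ev ` {..<d}) (vt i)"
  unfolding in_cone_def
proof (intro exI[of _ "\<lambda>c. c 0 * (1 / sqrt 2) + c (Suc i) * (1/sqrt 2)"] conjI ballI allI impI)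
  fix c assume "c \<in> ev ` {..<d}"
  then show "0 \<le> c 0 * (1 / sqrt 2) + c (Suc i) * (1 / sqrt 2)" by (auto simp: ev_def)
next
  fix j assume j: "j < d"
  have "(\<Sum>c\<in>ev ` {..<d}. (c 0 * (1 / sqrt 2) + c (Suc i) * (1 / sqrt 2)) * c j)
      = (\<Sum>k<d. (ev k 0 * (1 / sqrt 2) + ev k (Suc i) * (1 / sqrt 2)) * ev k j)"
    by (subst sum.reindex) (auto intro: inj_on_subset[OF ev_inj])
  also have "\<dots> = (\<Sum>k<d. if k = j then (ev j 0 * (1 / sqrt 2) + ev j (Suc i) * (1 / sqrt 2)) else 0)"
    by (intro sum.cong) (auto simp: ev_def)
  also have "\<dots> = vt i j" using j by (simp add: ev_def vt_def)
  finally show "vt i j = (\<Sum>c\<in>ev ` {..<d}. (c 0 * (1 / sqrt 2) + c (Suc i) * (1 / sqrt 2)) * c j)" by simp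
qed

lemma instance_ok:
  assumes "2 \<le> d"
  shows "valid_instance d (d - 1) vt (ev ` {..<d}) (\<lambda>i. ev (Suc i))"
  unfolding valid_instance_def
proof (intro conjI allI impI ballI)
  show "0 < d - 1" using assms by simp
  show "finite (ev ` {..<d})" by simp
  show "ev ` {..<d} \<noteq> {}" using assms by (auto simp: lessThan_empty_iff)
  show "unit_nonneg d c" if "c \<in> ev ` {..<d}" for c using that ev_unit by auto
  fix i assume i: "i < d - 1"
  then show "unit_nonneg d (vt i)" using vt_unit by simp
  show "in_cone d (ev ` {..<d}) (vt i)" using i vt_cone by simp
  show "ev (Suc i) \<in> ev ` {..<d}" using i by auto
  fix c assume "c \<in> ev ` {..<d}"
  then obtain k where k: "k < d" "c = ev k" by auto
  show "ip d (vt i) c \<le> ip d (vt i) (ev (Suc i))"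
    using k i by (simp add: ip_ev) (simp add: vt_def)
qed

lemma UW_ev0: "UW d n vt (ev 0) = real n / sqrt 2" if "0 < d"
  unfolding UW_def using that by (simp add: ip_ev vt_def)

lemma UW_evS: assumes "Suc j < d" "j < n" shows "UW d n vt (ev (Suc j)) = 1 / sqrt 2"
proof -
  have "UW d n vt (ev (Suc j)) = (\<Sum>i<n. if i = j then 1 / sqrt 2 else 0)"
    unfolding UW_def using assms by (intro sum.cong) (auto simp: ip_ev vt_def)
  also have "\<dots> = 1 / sqrt 2" using assms by simp
  finally show ?thesis .
qed

lemma dist_ge:
  assumes "2 \<le> d"
  shows "real (d - 1) \<le> rd_distortion d (d - 1) vt (ev ` {..<d}) (\<lambda>i. ev (Suc i))"
proof -
  let ?n = "d - 1"
  have den: "(\<Sum>i<?n. UW d ?n vt (ev (Suc i))) / real ?n = 1 / sqrt 2"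
  proof -
    have "(\<Sum>i<?n. UW d ?n vt (ev (Suc i))) = (\<Sum>i<?n. 1 / sqrt 2)"
      by (intro sum.cong) (auto simp: UW_evS)
    then show ?thesis using assms by simp
  qed
  have mx: "real ?n / sqrt 2 \<le> (MAX c\<in>ev ` {..<d}. UW d ?n vt c)"
  proof -
    have "UW d ?n vt (ev 0) \<le> (MAX c\<in>ev ` {..<d}. UW d ?n vt c)"
      using assms by (intro Max_ge) auto
    moreover have "UW d ?n vt (ev 0) = real ?n / sqrt 2" using assms UW_ev0[of d ?n] by simp
    ultimately show ?thesis by simp
  qed
  have "real ?n = (real ?n / sqrt 2) / (1 / sqrt 2)" by simp
  also have "\<dots> \<le> (MAX c\<in>ev ` {..<d}. UW d ?n vt c) / (1 / sqrt 2)"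
    using mx by (intro divide_right_mono) auto
  finally show ?thesis unfolding rd_distortion_def den .
qed

theorem mainTheorem12:
  shows "\<exists>c::real > 0. \<exists>d0::nat. \<forall>d\<ge>d0. ereal (c * real d) \<le> rd_worst_distortion d"
proof (intro exI[of _ "1/2"] conjI exI[of _ 2] allI impI)
  fix d :: nat assume d: "2 \<le> d"
  have "ereal (1/2 * real d) \<le> ereal (real (d - 1))" using d by simp
  also have "\<dots> \<le> ereal (rd_distortion d (d - 1) vt (ev ` {..<d}) (\<lambda>i. ev (Suc i)))"
    using dist_ge[OF d] by simp
  also have "\<dots> \<le> rd_worst_distortion d"
    unfolding rd_worst_distortion_def
    by (rule SUP_upper2[where i = "(d - 1, vt, ev ` {..<d}, \<lambda>i. ev (Suc i))"])
       (use instance_ok[OF d] in auto)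
  finally show "ereal (1/2 * real d) \<le> rd_worst_distortion d" .
qed (simp)

end
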